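(* Let $T\subset\mathbb{R}^2$ be a triangle and let $\Lambda\subset\mathbb{R}^2$ be a $2$-dimensional lattice. If $T$ is lattice complete with respect to $\Lambda$, then $T$ is lattice reduced with respect to $\Lambda$. The converse does not hold: there exist a $2$-dimensional lattice and a triangle that is lattice reduced but not lattice complete with respect to it.
   Context: A lattice $\Lambda\subset\mathbb{R}^2$ is a discrete subgroup spanning $\mathbb{R}^2$, with dual lattice $\Lambda^\star=\{y: x\cdot y\in\mathbb{Z}\ \forall x\in\Lambda\}$. For a convex body $C$ (compact convex set with non-empty interior), the lattice width is $\mathrm{wdt}_\Lambda(C)=\min_{y\in\Lambda^\star\setminus\{0\}}\max_{a,b\in C}y\cdot(a-b)$. A segment $[a,b]$ is a lattice segment if $b-a$ is parallel to a nonzero vector of $\Lambda$; its lattice length is $|b-a|/|v|$ where $v$ generates $\Lambda\cap\mathrm{span}\{b-a\}$ and is a positive multiple of $b-a$. The lattice diameter $\mathrm{diam}_\Lambda(C)$ is the maximum lattice length of a lattice segment in $C$. $C$ is lattice reduced if no convex body $C'\subsetneq C$ has $\mathrm{wdt}_\Lambda(C')=\mathrm{wdt}_\Lambda(C)$; lattice complete if no convex body $C'\supsetneq C$ has $\mathrm{diam}_\Lambda(C')=\mathrm{diam}_\Lambda(C)$. *)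

theory Defs
  imports "HOL-Analysis.Analysis"
begin

type_synonym pt = "real ^ 2"

definition is_lattice :: "pt set \<Rightarrow> bool" where
  "is_lattice L \<longleftrightarrow>
     0 \<in> L \<and> (\<forall>x\<in>L. \<forall>y\<in>L. x - y \<in> L) \<and>
     (\<exists>e>0. \<forall>x\<in>L. x \<noteq> 0 \<longrightarrow> e \<le> norm x) \<and>
     span L = UNIV"

definition dual_lattice :: "pt set \<Rightarrow> pt set" where
  "dual_lattice L = {y. \<forall>x\<in>L. x \<bullet> y \<in> \<int>}"

definition convex_body :: "pt set \<Rightarrow> bool" where
  "convex_body C \<longleftrightarrow> compact C \<and> convex C \<and> interior C \<noteq> {}"

definition dir_width :: "pt \<Rightarrow> pt set \<Rightarrow> real" where
  "dir_width y C = Sup {y \<bullet> (a - b) | a b. a \<in> C \<and> b \<in> C}"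

definition lattice_width :: "pt set \<Rightarrow> pt set \<Rightarrow> real" where
  "lattice_width L C = Inf {dir_width y C | y. y \<in> dual_lattice L \<and> y \<noteq> 0}"

definition lattice_generator :: "pt set \<Rightarrow> pt \<Rightarrow> pt \<Rightarrow> pt \<Rightarrow> bool" where
  "lattice_generator L a b v \<longleftrightarrow>
     v \<in> L \<and> v \<noteq> 0 \<and> (\<exists>t>0. v = t *\<^sub>R (b - a)) \<and>
     L \<inter> span {b - a} = range (\<lambda>k::int. of_int k *\<^sub>R v)"

definition lattice_lengths :: "pt set \<Rightarrow> pt set \<Rightarrow> real set" where
  "lattice_lengths L C =
     {norm (b - a) / norm v | a b v. a \<in> C \<and> b \<in> C \<and> a \<noteq> b \<and> lattice_generator L a b v}"

definition lattice_diameter :: "pt set \<Rightarrow> pt set \<Rightarrow> real" where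
  "lattice_diameter L C = Sup (lattice_lengths L C)"

definition lattice_reduced :: "pt set \<Rightarrow> pt set \<Rightarrow> bool" where
  "lattice_reduced L C \<longleftrightarrow> convex_body C \<and>
     \<not> (\<exists>C'. convex_body C' \<and> C' \<subset> C \<and> lattice_width L C' = lattice_width L C)"

definition lattice_complete :: "pt set \<Rightarrow> pt set \<Rightarrow> bool" where
  "lattice_complete L C \<longleftrightarrow> convex_body C \<and>
     \<not> (\<exists>C'. convex_body C' \<and> C \<subset> C' \<and> lattice_diameter L C' = lattice_diameter L C)"

definition is_triangle :: "pt set \<Rightarrow> bool" where
  "is_triangle T \<longleftrightarrow> (\<exists>a b c. \<not> collinear {a, b, c} \<and> T = convex hull {a, b, c})"

end

theory Submission
  imports Defs
begin



lemma lat_0: "is_lattice L \<Longrightarrow> 0 \<in> L"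
  by (simp add: is_lattice_def)
lemma lat_diff: "is_lattice L \<Longrightarrow> x \<in> L \<Longrightarrow> y \<in> L \<Longrightarrow> x - y \<in> L"
  by (simp add: is_lattice_def)
lemma lat_neg: "is_lattice L \<Longrightarrow> x \<in> L \<Longrightarrow> - x \<in> L"
  using lat_diff[of L 0 x] lat_0[of L] by simp
lemma lat_add: "is_lattice L \<Longrightarrow> x \<in> L \<Longrightarrow> y \<in> L \<Longrightarrow> x + y \<in> L"
  using lat_diff[of L x "-y"] lat_neg[of L y] by simp
lemma lat_int: assumes "is_lattice L" "x \<in> L" shows "of_int k *\<^sub>R x \<in> L"
proof (induct k rule: int_induct[where k=0])
  case base then show ?case using lat_0[OF assms(1)] by simp
next
  case (step1 i)
  have "of_int (i+1) *\<^sub>R x = of_int i *\<^sub>R x + x" by (simp add: algebra_simps)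
  then show ?case using lat_add[OF assms(1) step1(2) assms(2)] by simp
next
  case (step2 i)
  have "of_int (i-1) *\<^sub>R x = of_int i *\<^sub>R x - x" by (simp add: algebra_simps)
  then show ?case using lat_diff[OF assms(1) step2(2) assms(2)] by simp
qed
lemma lat_disc: "is_lattice L \<Longrightarrow> \<exists>e>0. \<forall>x\<in>L. x \<noteq> 0 \<longrightarrow> e \<le> norm x"
  by (simp add: is_lattice_def)

lemma lat_finite: assumes L: "is_lattice L" and S: "bounded S" shows "finite (L \<inter> S)"
proof (rule ccontr)
  assume inf: "infinite (L \<inter> S)"
  obtain e where e: "e > 0" "\<forall>x\<in>L. x \<noteq> 0 \<longrightarrow> e \<le> norm x" using lat_disc[OF L] by blast
  have "compact (closure S)" using S by (simp add: compact_closure)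
  then obtain x where "x islimpt (L \<inter> S)"
    using Heine_Borel_imp_Bolzano_Weierstrass[OF _ inf] closure_subset by blast
  then have ap: "\<forall>\<epsilon>>0. \<exists>x'\<in>L \<inter> S. x' \<noteq> x \<and> dist x' x < \<epsilon>" by (simp add: islimpt_approachable)
  obtain y where y: "y \<in> L \<inter> S" "y \<noteq> x" "dist y x < e/2" using ap e(1) by (meson half_gt_zero)
  have "dist y x > 0" using y(2) by simp
  then obtain z where z: "z \<in> L \<inter> S" "z \<noteq> x" "dist z x < min (e/2) (dist y x)"
    using ap e(1) by (metis half_gt_zero min_less_iff_conj)
  have "z \<noteq> y" using z(3) by auto
  have "y - z \<in> L" using y z L lat_diff by blast
  moreover have "y - z \<noteq> 0" using \<open>z \<noteq> y\<close> by simp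
  moreover have "norm (y - z) < e"
  proof -
    have "norm (y - z) \<le> dist y x + dist z x" by (metis dist_commute dist_norm dist_triangle)
    then show ?thesis using y(3) z(3) by linarith
  qed
  ultimately show False using e(2) by force
qed


lemma span1: "x \<in> span {w} \<longleftrightarrow> (\<exists>r::real. x = r *\<^sub>R w)"
  by (auto simp: span_singleton)

lemma gen_exists:
  assumes L: "is_lattice L" and g: "g \<in> L" "g \<noteq> 0" and c: "c > 0" "g = c *\<^sub>R (b - a)"
  shows "\<exists>v. lattice_generator L a b v"
proof -
  define w where "w = b - a"
  have w0: "w \<noteq> 0" using g c by (auto simp: w_def)
  define R where "R = {r. 0 < r \<and> r \<le> c \<and> r *\<^sub>R w \<in> L}"
  have cR: "c \<in> R" using c g by (simp add: R_def w_def)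
  have fin: "finite R"
  proof -
    have "(\<lambda>r. r *\<^sub>R w) ` R \<subseteq> L \<inter> cball 0 (c * norm w)" by (auto simp: R_def) (simp add: mult_right_mono)
    then have "finite ((\<lambda>r. r *\<^sub>R w) ` R)" using lat_finite[OF L bounded_cball] finite_subset by blast
    moreover have "inj_on (\<lambda>r. r *\<^sub>R w) R" using w0 by (auto intro: inj_onI)
    ultimately show ?thesis using finite_imageD by blast
  qed
  define r0 where "r0 = Min R"
  have r0R: "r0 \<in> R" using fin cR Min_in r0_def by auto
  have r0min: "\<forall>r\<in>R. r0 \<le> r" using fin by (simp add: r0_def)
  have r0pos: "r0 > 0" "r0 \<le> c" using r0R by (auto simp: R_def)
  define v where "v = r0 *\<^sub>R w"
  have vL: "v \<in> L" using r0R by (simp add: R_def v_def)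
  have "L \<inter> span {b - a} = range (\<lambda>k::int. of_int k *\<^sub>R v)"
  proof
    show "L \<inter> span {b - a} \<subseteq> range (\<lambda>k::int. of_int k *\<^sub>R v)"
    proof
      fix x assume x: "x \<in> L \<inter> span {b - a}"
      then obtain r where r: "x = r *\<^sub>R w" by (auto simp: span1 w_def)
      define k where "k = floor (r / r0)"
      have k1: "of_int k * r0 \<le> r" using r0pos(1) unfolding k_def
        by (metis floor_divide_lower)
      have k2: "r < of_int k * r0 + r0" using r0pos(1) unfolding k_def
        by (metis floor_divide_upper distrib_right mult_1 add.commute)
      have "x - of_int k *\<^sub>R v \<in> L" using x lat_diff[OF L] lat_int[OF L vL] by blast
      moreover have "x - of_int k *\<^sub>R v = (r - of_int k * r0) *\<^sub>R w"
        by (simp add: r v_def algebra_simps)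
      ultimately have inL: "(r - of_int k * r0) *\<^sub>R w \<in> L" by simp
      have "r - of_int k * r0 = 0"
      proof (rule ccontr)
        assume "r - of_int k * r0 \<noteq> 0"
        then have "r - of_int k * r0 \<in> R" using k1 k2 r0pos inL by (auto simp: R_def)
        then show False using r0min k2 by force
      qed
      then have "x = of_int k *\<^sub>R v" by (simp add: r v_def)
      then show "x \<in> range (\<lambda>k::int. of_int k *\<^sub>R v)" by blast
    qed
  next
    show "range (\<lambda>k::int. of_int k *\<^sub>R v) \<subseteq> L \<inter> span {b - a}"
      using lat_int[OF L vL] by (auto simp: span1 v_def w_def)
  qed
  then have "lattice_generator L a b v"
    unfolding lattice_generator_def using vL r0pos w0 by (auto simp: v_def w_def)
  then show ?thesis by blast
qed

lemma gen_len:
  assumes "lattice_generator L a b v" "a \<noteq> b"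
  shows "\<exists>t>0. v = t *\<^sub>R (b - a) \<and> norm (b - a) / norm v = 1 / t"
proof -
  obtain t where t: "t > 0" "v = t *\<^sub>R (b - a)" using assms(1) by (auto simp: lattice_generator_def)
  have "norm (b - a) > 0" using assms(2) by simp
  moreover have "norm v = t * norm (b - a)" unfolding t(2) using t(1) by simp
  ultimately have "norm (b - a) / norm v = 1 / t" using t(1) by simp
  then show ?thesis using t by blast
qed

lemma gen_len_ge:
  assumes L: "is_lattice L" and gen: "lattice_generator L a b v" and g: "g \<in> L" "g \<noteq> 0"
    and c: "c > 0" "b - a = c *\<^sub>R g"
  shows "norm (b - a) / norm v \<ge> c"
proof -
  have ab: "a \<noteq> b" using g c by auto
  obtain t where t: "t > 0" "v = t *\<^sub>R (b - a)" "norm (b - a) / norm v = 1 / t" using gen_len[OF gen ab] by blast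
  have "g \<in> span {b - a}" using c g by (auto simp: span1 intro: exI[of _ "1/c"])
  then obtain k :: int where k: "g = of_int k *\<^sub>R v" using g gen unfolding lattice_generator_def by blast
  have "g = of_int k *\<^sub>R (t *\<^sub>R (b - a))" unfolding t(2)[symmetric] by (rule k)
  also have "\<dots> = (of_int k * t * c) *\<^sub>R g" unfolding c(2) by simp
  finally have "(1 - c * of_int k * t) *\<^sub>R g = 0" by (simp add: algebra_simps)
  then have "c * of_int k * t = 1" using g(2) by simp
  then have kct: "of_int k * (c * t) = 1" by (simp add: algebra_simps)
  have ct: "c * t > 0" using c t by simp
  have kpos: "of_int k > (0::real)"
  proof (rule ccontr)
    assume "\<not> of_int k > (0::real)"
    then have "of_int k * (c * t) \<le> 0" using ct by (simp add: mult_nonpos_nonneg)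
    then show False using kct by simp
  qed
  then have "k \<ge> 1" by simp
  then have k1: "of_int k \<ge> (1::real)" by simp
  have "c * t * 1 \<le> c * t * of_int k" using ct k1 by (intro mult_left_mono) auto
  then have "c * t \<le> 1" using kct by (simp add: algebra_simps)
  then have "c \<le> 1 / t" using t(1) by (simp add: field_simps)
  then show ?thesis using t(3) by simp
qed




section \<open>Lengths and diameter\<close>

lemma lengths_bdd: assumes L: "is_lattice L" and C: "bounded C"
  shows "bdd_above (lattice_lengths L C)"
proof -
  obtain e where e: "e > 0" "\<forall>x\<in>L. x \<noteq> 0 \<longrightarrow> e \<le> norm x" using lat_disc[OF L] by blast
  obtain B where B: "\<forall>x\<in>C. norm x \<le> B" using C bounded_iff by blast
  show ?thesis unfolding bdd_above_def
  proof (intro exI[of _ "2*B/e"] ballI)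
    fix l assume "l \<in> lattice_lengths L C"
    then obtain a b v where ab: "a \<in> C" "b \<in> C" and gen: "lattice_generator L a b v"
      and l: "l = norm (b - a) / norm v" by (auto simp: lattice_lengths_def)
    have v: "v \<in> L" "v \<noteq> 0" using gen by (auto simp: lattice_generator_def)
    have nv: "e \<le> norm v" using e v by blast
    have "norm a \<le> B" "norm b \<le> B" using B ab by auto
    then have nba: "norm (b - a) \<le> 2 * B" using norm_triangle_ineq4[of b a] by linarith
    have "norm (b - a) / norm v \<le> norm (b - a) / e" using nv e(1) by (simp add: frac_le)
    also have "\<dots> \<le> 2 * B / e" using nba e(1) by (simp add: divide_right_mono)
    finally show "l \<le> 2 * B / e" using l by simp
  qed
qed

lemma lat_nonzero: assumes L: "is_lattice L" shows "\<exists>g\<in>L. g \<noteq> 0"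
proof (rule ccontr)
  assume "\<not> (\<exists>g\<in>L. g \<noteq> 0)"
  then have "L \<subseteq> {0}" by auto
  then have "span L \<subseteq> {0}" by (metis span_empty span_insert_0 span_mono)
  moreover have "axis 1 1 \<in> span L" using L by (simp add: is_lattice_def)
  ultimately have "axis 1 (1::real) = (0::real^2)" by blast
  then show False by simp
qed

lemma lengths_pos: assumes L: "is_lattice L" and C: "convex_body C"
  shows "\<exists>l\<in>lattice_lengths L C. l > 0"
proof -
  obtain x0 where "x0 \<in> interior C" using C by (auto simp: convex_body_def)
  then obtain r where r: "r > 0" "ball x0 r \<subseteq> C" using mem_interior by blast
  obtain g where g: "g \<in> L" "g \<noteq> 0" using lat_nonzero[OF L] by blast
  define y0 where "y0 = x0 + (r / (2 * norm g)) *\<^sub>R g"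
  have ng: "norm g > 0" using g by simp
  have "dist x0 y0 = r / 2" using ng r by (simp add: y0_def dist_norm)
  then have "y0 \<in> C" using r by auto
  have "x0 \<in> C" using r by auto
  have "g = (2 * norm g / r) *\<^sub>R (y0 - x0)" using ng r by (simp add: y0_def)
  moreover have cpos: "2 * norm g / r > 0" using ng r by simp
  ultimately obtain v where gen: "lattice_generator L x0 y0 v"
    using gen_exists[OF L g cpos] by blast
  have "y0 \<noteq> x0" using ng r by (simp add: y0_def)
  moreover have "v \<noteq> 0" using gen by (simp add: lattice_generator_def)
  ultimately have "norm (y0 - x0) / norm v > 0" by simp
  moreover have "norm (y0 - x0) / norm v \<in> lattice_lengths L C"
    unfolding lattice_lengths_def using \<open>x0 \<in> C\<close> \<open>y0 \<in> C\<close> \<open>y0 \<noteq> x0\<close> gen by blast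
  ultimately show ?thesis by blast
qed

lemma cb_bounded: "convex_body C \<Longrightarrow> bounded C"
  by (simp add: convex_body_def compact_imp_bounded)

lemma diam_upper: "is_lattice L \<Longrightarrow> bounded C \<Longrightarrow> l \<in> lattice_lengths L C \<Longrightarrow> l \<le> lattice_diameter L C"
  unfolding lattice_diameter_def by (rule cSup_upper) (auto intro: lengths_bdd)

lemma diam_pos: "is_lattice L \<Longrightarrow> convex_body C \<Longrightarrow> lattice_diameter L C > 0"
  using lengths_pos diam_upper cb_bounded by fastforce

lemma dw_bdd: assumes "bounded C" shows "bdd_above {y \<bullet> (a - b) |a b. a \<in> C \<and> b \<in> C}"
proof -
  obtain B where B: "\<forall>x\<in>C. norm x \<le> B" using assms bounded_iff by blast
  show ?thesis unfolding bdd_above_def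
  proof (intro exI[of _ "norm y * (2*B)"] ballI)
    fix s assume "s \<in> {y \<bullet> (a - b) |a b. a \<in> C \<and> b \<in> C}"
    then obtain a b where ab: "a \<in> C" "b \<in> C" "s = y \<bullet> (a - b)" by blast
    have "s \<le> norm y * norm (a - b)" using ab(3) norm_cauchy_schwarz by simp
    have "norm a \<le> B" "norm b \<le> B" using B ab by auto
    then have "norm (a - b) \<le> 2*B" using norm_triangle_ineq4[of a b] by linarith
    then have "norm y * norm (a - b) \<le> norm y * (2*B)" by (simp add: mult_left_mono)
    then show "s \<le> norm y * (2*B)" using \<open>s \<le> norm y * norm (a - b)\<close> by linarith
  qed
qed

lemma dw_upper: "bounded C \<Longrightarrow> a \<in> C \<Longrightarrow> b \<in> C \<Longrightarrow> y \<bullet> (a - b) \<le> dir_width y C"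
  unfolding dir_width_def by (rule cSup_upper) (auto intro: dw_bdd)

lemma dw_nonneg: "bounded C \<Longrightarrow> a \<in> C \<Longrightarrow> 0 \<le> dir_width y C"
  using dw_upper[of C a a y] by simp

lemma dw_attained: assumes "compact C" "C \<noteq> {}"
  shows "\<exists>a\<in>C. \<exists>b\<in>C. dir_width y C = y \<bullet> (a - b)"
proof -
  let ?S = "{y \<bullet> (a - b) |a b. a \<in> C \<and> b \<in> C}"
  have S: "?S = (\<lambda>p. y \<bullet> (fst p - snd p)) ` (C \<times> C)" by force
  have "compact ((\<lambda>p. y \<bullet> (fst p - snd p)) ` (C \<times> C))"
    by (intro compact_continuous_image continuous_intros compact_Times assms)
  moreover have "(\<lambda>p. y \<bullet> (fst p - snd p)) ` (C \<times> C) \<noteq> {}" using assms by auto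
  ultimately obtain s where s0: "s \<in> (\<lambda>p. y \<bullet> (fst p - snd p)) ` (C \<times> C)"
      "\<forall>t\<in>(\<lambda>p. y \<bullet> (fst p - snd p)) ` (C \<times> C). t \<le> s"
    using compact_attains_sup by blast
  then have s: "s \<in> ?S" "\<forall>t\<in>?S. t \<le> s" unfolding S by auto
  then have "dir_width y C = s" unfolding dir_width_def by (intro cSup_eq_maximum) auto
  then show ?thesis using s(1) by auto
qed

lemma dw_strict:
  assumes C: "compact C" "C \<noteq> {}" "C \<subseteq> T" and bnd: "\<forall>x\<in>T. lo \<le> y \<bullet> x \<and> y \<bullet> x \<le> hi"
    and p: "p \<notin> C" and uniq: "(\<forall>x\<in>T. y \<bullet> x = hi \<longrightarrow> x = p) \<or> (\<forall>x\<in>T. y \<bullet> x = lo \<longrightarrow> x = p)"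
  shows "dir_width y C < hi - lo"
proof -
  obtain a b where ab: "a \<in> C" "b \<in> C" "dir_width y C = y \<bullet> (a - b)" using dw_attained[OF C(1,2)] by blast
  have "a \<in> T" "b \<in> T" using ab C by auto
  then have h: "y \<bullet> a \<le> hi" "lo \<le> y \<bullet> b" using bnd by auto
  have "a \<noteq> p" "b \<noteq> p" using ab p by auto
  then have "y \<bullet> a \<noteq> hi \<or> y \<bullet> b \<noteq> lo" using uniq \<open>a \<in> T\<close> \<open>b \<in> T\<close> by blast
  then show ?thesis using h ab(3) by (auto simp: inner_diff_right)
qed

lemma lw_le: assumes "y \<in> dual_lattice L" "y \<noteq> 0" "bounded C" "a \<in> C"
  shows "lattice_width L C \<le> dir_width y C"
  unfolding lattice_width_def
proof (rule cInf_lower)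
  show "dir_width y C \<in> {dir_width y C |y. y \<in> dual_lattice L \<and> y \<noteq> 0}" using assms by blast
  show "bdd_below {dir_width y C |y. y \<in> dual_lattice L \<and> y \<noteq> 0}"
    by (rule bdd_belowI[of _ 0]) (auto intro: dw_nonneg[OF assms(3,4)])
qed

lemma lw_ge: assumes "\<forall>y\<in>dual_lattice L. y \<noteq> 0 \<longrightarrow> m \<le> dir_width y C" "y0 \<in> dual_lattice L" "y0 \<noteq> 0"
  shows "m \<le> lattice_width L C"
  unfolding lattice_width_def
proof (rule cInf_greatest)
  show "{dir_width y C |y. y \<in> dual_lattice L \<and> y \<noteq> 0} \<noteq> {}" using assms(2,3) by blast
  fix x assume "x \<in> {dir_width y C |y. y \<in> dual_lattice L \<and> y \<noteq> 0}"
  then obtain y where "x = dir_width y C" "y \<in> dual_lattice L" "y \<noteq> 0" by blast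
  then show "m \<le> x" using assms(1) by simp
qed




section \<open>Coordinates in the plane\<close>

definition det2 :: "real^2 \<Rightarrow> real^2 \<Rightarrow> real" where "det2 u v = u$1 * v$2 - u$2 * v$1"

lemma inner2: "(x::real^2) \<bullet> y = x$1 * y$1 + x$2 * y$2"
  by (simp add: inner_vec_def sum_2)

lemma dual_basis: assumes D: "det2 u v \<noteq> 0"
  shows "\<exists>n1 n2. n1 \<bullet> u = 1 \<and> n1 \<bullet> v = 0 \<and> n2 \<bullet> u = 0 \<and> n2 \<bullet> v = 1 \<and>
     (\<forall>x. x = (n1 \<bullet> x) *\<^sub>R u + (n2 \<bullet> x) *\<^sub>R v)"
proof -
  define d where "d = det2 u v"
  define m1 :: "real^2" where "m1 = vector [v$2, -v$1]"
  define m2 :: "real^2" where "m2 = vector [-u$2, u$1]"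
  define n1 where "n1 = (1/d) *\<^sub>R m1"
  define n2 where "n2 = (1/d) *\<^sub>R m2"
  have d0: "d \<noteq> 0" using D by (simp add: d_def)
  have m: "m1 \<bullet> u = d" "m1 \<bullet> v = 0" "m2 \<bullet> u = 0" "m2 \<bullet> v = d"
    by (simp_all add: m1_def m2_def inner2 d_def det2_def algebra_simps)
  have "n1 \<bullet> u = 1" "n1 \<bullet> v = 0" "n2 \<bullet> u = 0" "n2 \<bullet> v = 1"
    using d0 m by (simp_all add: n1_def n2_def)
  moreover have "\<forall>x. x = (n1 \<bullet> x) *\<^sub>R u + (n2 \<bullet> x) *\<^sub>R v"
  proof
    fix x :: "real^2"
    have "(m1 \<bullet> x) *\<^sub>R u + (m2 \<bullet> x) *\<^sub>R v = d *\<^sub>R x"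
      unfolding vec_eq_iff forall_2 by (simp add: m1_def m2_def inner2 d_def det2_def algebra_simps)
    then have "(1/d) *\<^sub>R ((m1 \<bullet> x) *\<^sub>R u + (m2 \<bullet> x) *\<^sub>R v) = x" using d0 by simp
    then show "x = (n1 \<bullet> x) *\<^sub>R u + (n2 \<bullet> x) *\<^sub>R v"
      by (simp add: n1_def n2_def scaleR_add_right)
  qed
  ultimately show ?thesis by blast
qed

lemma noncol_det: assumes "\<not> collinear {a, b, c}" shows "det2 (b - a) (c - a) \<noteq> 0"
proof
  assume D: "det2 (b - a) (c - a) = 0"
  define u where "u = b - a"
  define v where "v = c - a"
  have D': "u$1 * v$2 = u$2 * v$1" using D by (simp add: det2_def u_def v_def)
  have "collinear {0, u, v}"
  proof (cases "u = 0")
    case True then show ?thesis by (simp add: collinear_lemma)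
  next
    case False
    show ?thesis
    proof (cases "u$1 = 0")
      case True
      then have "u$2 \<noteq> 0" using False by (simp add: vec_eq_iff forall_2)
      then have "v = (v$2 / u$2) *\<^sub>R u" using True D' unfolding vec_eq_iff forall_2 by simp
      then show ?thesis by (metis collinear_lemma)
    next
      case F1: False
      have "v = (v$1 / u$1) *\<^sub>R u" using F1 D' unfolding vec_eq_iff forall_2
        by (simp add: field_simps)
      then show ?thesis by (metis collinear_lemma)
    qed
  qed
  then have "collinear {b, a, c}" using collinear_3[of b a c] by (simp add: u_def v_def)
  moreover have "{b, a, c} = {a, b, c}" by auto
  ultimately have "collinear {a, b, c}" by simp
  then show False using assms by simp
qed

lemma det2_comb: "det2 (x *\<^sub>R u + y *\<^sub>R v) (z *\<^sub>R u + w *\<^sub>R v) = (x * w - y * z) * det2 u v"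
  by (simp add: det2_def algebra_simps)




lemma tri_mem:
  assumes "s \<ge> 0" "t \<ge> 0" "s + t \<le> 1"
  shows "a + s *\<^sub>R (b - a) + t *\<^sub>R (c - a) \<in> convex hull {a, b, c}"
proof -
  have "a + s *\<^sub>R (b - a) + t *\<^sub>R (c - a) = (1 - s - t) *\<^sub>R a + s *\<^sub>R b + t *\<^sub>R c"
    by (simp add: algebra_simps)
  moreover have "(1 - s - t) *\<^sub>R a + s *\<^sub>R b + t *\<^sub>R c \<in> convex hull {a, b, c}"
    unfolding convex_hull_3 using assms by (intro CollectI exI[of _ "1 - s - t"] exI[of _ s] exI[of _ t]) auto
  ultimately show ?thesis by simp
qed

lemma tri_coords:
  assumes "x \<in> convex hull {a, b, c}"
  shows "\<exists>s t. s \<ge> 0 \<and> t \<ge> 0 \<and> s + t \<le> 1 \<and> x = a + s *\<^sub>R (b - a) + t *\<^sub>R (c - a)"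
proof -
  obtain r s t where w: "r \<ge> 0" "s \<ge> 0" "t \<ge> 0" "r + s + t = 1" "x = r *\<^sub>R a + s *\<^sub>R b + t *\<^sub>R c"
    using assms unfolding convex_hull_3 by blast
  have "x = a + s *\<^sub>R (b - a) + t *\<^sub>R (c - a)"
  proof -
    have "r = 1 - s - t" using w(4) by simp
    then have "x = (1 - s - t) *\<^sub>R a + s *\<^sub>R b + t *\<^sub>R c" using w(5) by simp
    then show ?thesis by (simp add: algebra_simps)
  qed
  then show ?thesis using w by (intro exI[of _ s] exI[of _ t]) auto
qed

lemma slab:
  assumes "\<forall>y\<in>S. lo \<le> l \<bullet> y \<and> l \<bullet> y \<le> hi" "x \<in> convex hull S"
  shows "lo \<le> l \<bullet> x \<and> l \<bullet> x \<le> hi"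
proof -
  have "convex hull S \<subseteq> {y. l \<bullet> y \<le> hi} \<inter> {y. lo \<le> l \<bullet> y}"
    using assms(1) by (intro hull_minimal convex_Int convex_halfspace_le convex_halfspace_ge) auto
  then show ?thesis using assms(2) by auto
qed

lemma interior_lemma:
  assumes L: "is_lattice L" and T: "T = convex hull {a, b, c}" and cb: "convex_body T"
    and g: "g \<in> L" "g \<noteq> 0"
    and eq: "lattice_diameter L T *\<^sub>R g = \<sigma> *\<^sub>R (b - a) + \<tau> *\<^sub>R (c - a)"
    and bnd: "\<bar>\<sigma>\<bar> < 1" "\<bar>\<tau>\<bar> < 1" "\<bar>\<sigma> + \<tau>\<bar> < 1"
  shows False
proof -
  define d where "d = lattice_diameter L T"
  have d0: "d > 0" using diam_pos[OF L cb] by (simp add: d_def)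
  define m where "m = max \<bar>\<sigma>\<bar> (max \<bar>\<tau>\<bar> \<bar>\<sigma> + \<tau>\<bar>)"
  have m: "0 \<le> m" "m < 1" "\<bar>\<sigma>\<bar> \<le> m" "\<bar>\<tau>\<bar> \<le> m" "\<bar>\<sigma> + \<tau>\<bar> \<le> m" using bnd by (auto simp: m_def)
  define l where "l = 2 / (1 + m)"
  have l: "l > 1" "l * m \<le> 1" using m by (auto simp: l_def field_simps)
  define s' where "s' = l * \<sigma>"
  define t' where "t' = l * \<tau>"
  have "\<bar>s'\<bar> \<le> 1" unfolding s'_def abs_mult using l m
    by (metis abs_of_pos dual_order.trans less_trans mult_left_mono zero_less_one less_imp_le)
  moreover have "\<bar>t'\<bar> \<le> 1" unfolding t'_def abs_mult using l m
    by (metis abs_of_pos dual_order.trans less_trans mult_left_mono zero_less_one less_imp_le)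
  moreover have "\<bar>s' + t'\<bar> \<le> 1" unfolding s'_def t'_def distrib_left[symmetric] abs_mult using l m
    by (metis abs_of_pos dual_order.trans less_trans mult_left_mono zero_less_one less_imp_le)
  ultimately have st: "\<bar>s'\<bar> \<le> 1" "\<bar>t'\<bar> \<le> 1" "\<bar>s' + t'\<bar> \<le> 1" by auto
  define y where "y = a + max s' 0 *\<^sub>R (b - a) + max t' 0 *\<^sub>R (c - a)"
  define x where "x = a + max (-s') 0 *\<^sub>R (b - a) + max (-t') 0 *\<^sub>R (c - a)"
  have yT: "y \<in> T" unfolding y_def T using st by (intro tri_mem) (auto simp: max_def)
  have xT: "x \<in> T" unfolding x_def T using st by (intro tri_mem) (auto simp: max_def)
  have "y - x = s' *\<^sub>R (b - a) + t' *\<^sub>R (c - a)"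
  proof -
    have "y - x = (max s' 0 - max (-s') 0) *\<^sub>R (b - a) + (max t' 0 - max (-t') 0) *\<^sub>R (c - a)"
      by (simp add: x_def y_def algebra_simps)
    moreover have "max s' 0 - max (-s') 0 = s'" "max t' 0 - max (-t') 0 = t'" by (auto simp: max_def)
    ultimately show ?thesis by simp
  qed
  also have "\<dots> = l *\<^sub>R (\<sigma> *\<^sub>R (b - a) + \<tau> *\<^sub>R (c - a))" by (simp add: s'_def t'_def scaleR_add_right)
  also have "\<dots> = l *\<^sub>R (d *\<^sub>R g)" using eq by (simp add: d_def)
  also have "\<dots> = (l * d) *\<^sub>R g" by simp
  finally have yx: "y - x = (l * d) *\<^sub>R g" .
  have ld: "l * d > 0" using l d0 by simp
  have "y \<noteq> x" using yx ld g by auto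
  have "g = (1 / (l * d)) *\<^sub>R (y - x)" using yx ld l d0 by simp
  moreover have "1 / (l * d) > 0" using ld by simp
  ultimately obtain v where gen: "lattice_generator L x y v" using gen_exists[OF L g] by blast
  have "norm (y - x) / norm v \<ge> l * d" using gen_len_ge[OF L gen g ld yx] .
  moreover have "norm (y - x) / norm v \<in> lattice_lengths L T"
    unfolding lattice_lengths_def using xT yT \<open>y \<noteq> x\<close> gen by blast
  ultimately have "l * d \<le> d" using diam_upper[OF L cb_bounded[OF cb]] d_def by fastforce
  then show False using l d0 by simp
qed




lemma cevian:
  assumes L: "is_lattice L" and nc: "\<not> collinear {a, b, c}" and T: "T = convex hull {a, b, c}"
    and comp: "lattice_complete L T"
  shows "\<exists>h\<in>L. \<exists>\<alpha>. 0 < \<alpha> \<and> \<alpha> < 1 \<and>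
           lattice_diameter L T *\<^sub>R h = (1 - \<alpha>) *\<^sub>R (b - a) + \<alpha> *\<^sub>R (c - a)"
proof -
  have cb: "convex_body T" using comp by (simp add: lattice_complete_def)
  define d where "d = lattice_diameter L T"
  have d0: "d > 0" using diam_pos[OF L cb] d_def by simp
  define u where "u = b - a"
  define v where "v = c - a"
  have bu: "b = a + u" and cv: "c = a + v" by (simp_all add: u_def v_def)
  obtain n1 n2 where nb: "n1 \<bullet> u = 1" "n1 \<bullet> v = 0" "n2 \<bullet> u = 0" "n2 \<bullet> v = 1"
     and dec: "\<forall>x. x = (n1 \<bullet> x) *\<^sub>R u + (n2 \<bullet> x) *\<^sub>R v"
    using dual_basis[OF noncol_det[OF nc]] unfolding u_def v_def by blast
  define C where "C \<epsilon> g \<longleftrightarrow> \<bar>n1 \<bullet> (d *\<^sub>R g)\<bar> < 1 \<and> \<bar>n2 \<bullet> (d *\<^sub>R g)\<bar> < 1 \<and>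
      1 \<le> n1 \<bullet> (d *\<^sub>R g) + n2 \<bullet> (d *\<^sub>R g) \<and>
      \<bar>(1+\<epsilon>) * (n1 \<bullet> (d *\<^sub>R g)) + (1-\<epsilon>) * (n2 \<bullet> (d *\<^sub>R g))\<bar> < 1 + \<epsilon> \<and>
      \<bar>(1-\<epsilon>) * (n1 \<bullet> (d *\<^sub>R g)) + (1+\<epsilon>) * (n2 \<bullet> (d *\<^sub>R g))\<bar> < 1 + \<epsilon>" for \<epsilon> g
  define F where "F = {g \<in> L. \<bar>n1 \<bullet> (d *\<^sub>R g)\<bar> \<le> 1 \<and> \<bar>n2 \<bullet> (d *\<^sub>R g)\<bar> \<le> 1}"
  have finF: "finite F"
  proof -
    have "F \<subseteq> L \<inter> cball 0 ((norm u + norm v) / d)"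
    proof
      fix g assume g: "g \<in> F"
      define s where "s = n1 \<bullet> (d *\<^sub>R g)"
      define t where "t = n2 \<bullet> (d *\<^sub>R g)"
      have st: "\<bar>s\<bar> \<le> 1" "\<bar>t\<bar> \<le> 1" using g by (auto simp: F_def s_def t_def)
      have "d *\<^sub>R g = s *\<^sub>R u + t *\<^sub>R v" using dec s_def t_def by blast
      then have "norm (d *\<^sub>R g) \<le> norm (s *\<^sub>R u) + norm (t *\<^sub>R v)" by (metis norm_triangle_ineq)
      also have "\<dots> = \<bar>s\<bar> * norm u + \<bar>t\<bar> * norm v" by simp
      also have "\<dots> \<le> norm u + norm v" using st
        by (intro add_mono mult_left_le_one_le) auto
      finally have "d * norm g \<le> norm u + norm v" using d0 by simp
      then have "norm g \<le> (norm u + norm v) / d" using d0 by (simp add: field_simps)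
      then show "g \<in> L \<inter> cball 0 ((norm u + norm v) / d)" using g by (simp add: F_def)
    qed
    then show ?thesis using lat_finite[OF L bounded_cball] finite_subset by blast
  qed
  have claim1: "\<exists>g\<in>F. C \<epsilon> g" if \<epsilon>: "0 < \<epsilon>" "\<epsilon> \<le> 1/2" for \<epsilon>
  proof -
    define p where "p = a + ((1+\<epsilon>)/2) *\<^sub>R (u + v)"
    define K where "K = convex hull {a, b, c, p}"
    have TK: "T \<subseteq> K" unfolding T K_def by (rule hull_mono) auto
    have pK: "p \<in> K" unfolding K_def by (rule hull_inc) simp
    have ival: "l \<bullet> b = l \<bullet> a + l \<bullet> u" "l \<bullet> c = l \<bullet> a + l \<bullet> v"
       "l \<bullet> p = l \<bullet> a + ((1+\<epsilon>)/2) * (l \<bullet> u + l \<bullet> v)" for l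
      by (simp_all add: bu cv p_def inner_add_right)
    have pT: "p \<notin> T"
    proof
      assume "p \<in> T"
      then have "(n1+n2) \<bullet> p \<le> (n1+n2) \<bullet> a + 1"
        using slab[of "{a,b,c}" "(n1+n2) \<bullet> a" "n1+n2" "(n1+n2) \<bullet> a + 1" p] T
        by (simp add: ival inner_add_left nb)
      then show False using \<epsilon> by (simp add: ival inner_add_left nb)
    qed
    have cbK: "convex_body K"
    proof -
      have "compact K" unfolding K_def by (intro compact_convex_hull finite_imp_compact) simp
      moreover have "convex K" unfolding K_def by simp
      moreover have "interior T \<subseteq> interior K" using TK by (rule interior_mono)
      ultimately show ?thesis using cb by (auto simp: convex_body_def)
    qed
    have "T \<subset> K" using TK pK pT by auto
    then have neq: "lattice_diameter L K \<noteq> d" using comp cbK unfolding lattice_complete_def d_def by blast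
    have bddK: "bdd_above (lattice_lengths L K)" using lengths_bdd[OF L cb_bounded[OF cbK]] .
    have neT: "lattice_lengths L T \<noteq> {}" using lengths_pos[OF L cb] by blast
    have subl: "lattice_lengths L T \<subseteq> lattice_lengths L K"
      unfolding lattice_lengths_def using TK by blast
    have "d \<le> lattice_diameter L K"
      unfolding d_def lattice_diameter_def using neT bddK subl by (rule cSup_subset_mono)
    then have "d < Sup (lattice_lengths L K)" using neq by (simp add: lattice_diameter_def)
    moreover have "lattice_lengths L K \<noteq> {}" using neT subl by blast
    ultimately obtain l where l: "l \<in> lattice_lengths L K" "d < l" using less_cSup_iff bddK by blast
    then obtain x y w where xy: "x \<in> K" "y \<in> K" "x \<noteq> y" and gen: "lattice_generator L x y w"
      and lw: "l = norm (y - x) / norm w" unfolding lattice_lengths_def by blast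
    obtain t where t: "t > 0" "w = t *\<^sub>R (y - x)" "norm (y - x) / norm w = 1 / t" using gen_len[OF gen xy(3)] by blast
    have wL: "w \<in> L" "w \<noteq> 0" using gen by (auto simp: lattice_generator_def)
    define \<mu> where "\<mu> = d * t"
    have "d < 1 / t" using l(2) lw t(3) by simp
    then have "d * t < 1" using t(1) by (simp add: field_simps)
    then have \<mu>: "0 < \<mu>" "\<mu> < 1" using t d0 by (auto simp: \<mu>_def)
    have dw: "d *\<^sub>R w = \<mu> *\<^sub>R (y - x)" by (simp add: t(2) \<mu>_def)
    have bnds: "\<bar>l \<bullet> (y - x)\<bar> \<le> hi - lo"
      if "lo \<le> l \<bullet> a" "l \<bullet> a \<le> hi" "lo \<le> l \<bullet> b" "l \<bullet> b \<le> hi" "lo \<le> l \<bullet> c" "l \<bullet> c \<le> hi"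
         "lo \<le> l \<bullet> p" "l \<bullet> p \<le> hi" for l lo hi
    proof -
      have "\<forall>z\<in>{a,b,c,p}. lo \<le> l \<bullet> z \<and> l \<bullet> z \<le> hi" using that by auto
      then have "lo \<le> l \<bullet> x \<and> l \<bullet> x \<le> hi" "lo \<le> l \<bullet> y \<and> l \<bullet> y \<le> hi"
        using slab xy(1,2) unfolding K_def by blast+
      then show ?thesis by (simp add: inner_diff_right abs_le_iff)
    qed
    have b1: "\<bar>n1 \<bullet> (y - x)\<bar> \<le> 1"
      using bnds[of "n1 \<bullet> a" n1 "n1 \<bullet> a + 1"] \<epsilon> by (simp add: ival nb)
    have b2: "\<bar>n2 \<bullet> (y - x)\<bar> \<le> 1"
      using bnds[of "n2 \<bullet> a" n2 "n2 \<bullet> a + 1"] \<epsilon> by (simp add: ival nb)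
    define \<phi> where "\<phi> = (1+\<epsilon>) *\<^sub>R n1 + (1-\<epsilon>) *\<^sub>R n2"
    define \<psi> where "\<psi> = (1-\<epsilon>) *\<^sub>R n1 + (1+\<epsilon>) *\<^sub>R n2"
    have \<phi>u: "\<phi> \<bullet> u = 1+\<epsilon>" "\<phi> \<bullet> v = 1-\<epsilon>" "\<psi> \<bullet> u = 1-\<epsilon>" "\<psi> \<bullet> v = 1+\<epsilon>"
      by (simp_all add: \<phi>_def \<psi>_def inner_add_left nb)
    have b3: "\<bar>\<phi> \<bullet> (y - x)\<bar> \<le> 1 + \<epsilon>"
      using bnds[of "\<phi> \<bullet> a" \<phi> "\<phi> \<bullet> a + (1+\<epsilon>)"] \<epsilon> by (simp add: ival \<phi>u field_simps)
    have b4: "\<bar>\<psi> \<bullet> (y - x)\<bar> \<le> 1 + \<epsilon>"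
      using bnds[of "\<psi> \<bullet> a" \<psi> "\<psi> \<bullet> a + (1+\<epsilon>)"] \<epsilon> by (simp add: ival \<phi>u field_simps)
    define s where "s = n1 \<bullet> (d *\<^sub>R w)"
    define r where "r = n2 \<bullet> (d *\<^sub>R w)"
    have s: "s = \<mu> * (n1 \<bullet> (y - x))" and r: "r = \<mu> * (n2 \<bullet> (y - x))" by (simp_all add: s_def r_def dw)
    have \<phi>sr: "(1+\<epsilon>) * s + (1-\<epsilon>) * r = \<mu> * (\<phi> \<bullet> (y - x))"
      by (simp add: s r \<phi>_def inner_add_left algebra_simps)
    have \<psi>sr: "(1-\<epsilon>) * s + (1+\<epsilon>) * r = \<mu> * (\<psi> \<bullet> (y - x))"
      by (simp add: s r \<psi>_def inner_add_left algebra_simps)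
    have lt: "\<bar>\<mu> * z\<bar> < B" if "\<bar>z\<bar> \<le> B" "B > 0" for z B
    proof -
      have "\<bar>\<mu> * z\<bar> = \<mu> * \<bar>z\<bar>" using \<mu> by (simp add: abs_mult)
      also have "\<dots> \<le> \<mu> * B" using that \<mu> by (simp add: mult_left_mono)
      also have "\<dots> < B" using that \<mu> by simp
      finally show ?thesis .
    qed
    have sb: "\<bar>s\<bar> < 1" "\<bar>r\<bar> < 1" using lt[OF b1] lt[OF b2] s r by auto
    have pb: "\<bar>(1+\<epsilon>) * s + (1-\<epsilon>) * r\<bar> < 1 + \<epsilon>" "\<bar>(1-\<epsilon>) * s + (1+\<epsilon>) * r\<bar> < 1 + \<epsilon>"
      using lt[OF b3] lt[OF b4] \<phi>sr \<psi>sr \<epsilon> by auto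
    have decw: "lattice_diameter L T *\<^sub>R w = s *\<^sub>R (b - a) + r *\<^sub>R (c - a)"
      using dec s_def r_def d_def u_def v_def by metis
    have sr1: "\<bar>s + r\<bar> \<ge> 1"
    proof (rule ccontr)
      assume "\<not> \<bar>s + r\<bar> \<ge> 1"
      then show False using interior_lemma[OF L T cb wL decw] sb by simp
    qed
    show ?thesis
    proof (cases "s + r \<ge> 1")
      case True
      have "w \<in> F" using wL sb by (simp add: F_def s_def r_def)
      moreover have "C \<epsilon> w" unfolding C_def s_def[symmetric] r_def[symmetric] using sb pb True by simp
      ultimately show ?thesis by blast
    next
      case False
      then have F: "s + r \<le> -1" using sr1 by simp
      have e: "n1 \<bullet> (d *\<^sub>R (- w)) = - s" "n2 \<bullet> (d *\<^sub>R (- w)) = - r" by (simp_all add: s_def r_def)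
      have "- w \<in> F" using lat_neg[OF L wL(1)] sb by (simp add: F_def s_def r_def)
      moreover have "C \<epsilon> (- w)" unfolding C_def e using sb pb F
        by (simp add: abs_minus_commute) (simp add: add.commute)
      ultimately show ?thesis by blast
    qed
  qed
  have claim2: "\<exists>g\<in>F. \<forall>e>0. \<exists>\<epsilon>. 0 < \<epsilon> \<and> \<epsilon> < e \<and> C \<epsilon> g"
  proof (rule ccontr)
    assume "\<not> ?thesis"
    then have "\<forall>g\<in>F. \<exists>e. e > 0 \<and> (\<forall>\<epsilon>. 0 < \<epsilon> \<and> \<epsilon> < e \<longrightarrow> \<not> C \<epsilon> g)" by blast
    then obtain E where E: "\<forall>g\<in>F. E g > 0 \<and> (\<forall>\<epsilon>. 0 < \<epsilon> \<and> \<epsilon> < E g \<longrightarrow> \<not> C \<epsilon> g)" by metis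
    define e0 where "e0 = Min (insert (1/2) (E ` F))"
    have fin: "finite (insert (1/2) (E ` F))" using finF by simp
    have e0: "e0 > 0" unfolding e0_def using fin E by (simp add: Min_gr_iff)
    have e0h: "e0 \<le> 1/2" unfolding e0_def using fin by (intro Min_le) auto
    have e0E: "\<forall>g\<in>F. e0 \<le> E g" unfolding e0_def using fin by (auto intro: Min_le)
    obtain g where g: "g \<in> F" "C (e0/2) g" using claim1[of "e0/2"] e0 e0h by auto
    then show False using E e0E e0 by force
  qed
  then obtain g where gF: "g \<in> F" and gP: "\<forall>e>0. \<exists>\<epsilon>. 0 < \<epsilon> \<and> \<epsilon> < e \<and> C \<epsilon> g" by blast
  define s where "s = n1 \<bullet> (d *\<^sub>R g)"
  define r where "r = n2 \<bullet> (d *\<^sub>R g)"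
  have Cg: "\<bar>s\<bar> < 1 \<and> \<bar>r\<bar> < 1 \<and> 1 \<le> s + r \<and> \<bar>(1+\<epsilon>) * s + (1-\<epsilon>) * r\<bar> < 1 + \<epsilon> \<and>
      \<bar>(1-\<epsilon>) * s + (1+\<epsilon>) * r\<bar> < 1 + \<epsilon>" if "C \<epsilon> g" for \<epsilon>
    using that unfolding C_def s_def r_def .
  obtain \<epsilon>1 where e1: "0 < \<epsilon>1" "C \<epsilon>1 g" using gP by (meson zero_less_one)
  have sr: "\<bar>s\<bar> < 1" "\<bar>r\<bar> < 1" "1 \<le> s + r" using Cg[OF e1(2)] by auto
  have sr1: "s + r = 1"
  proof (rule ccontr)
    assume "s + r \<noteq> 1"
    then have S: "s + r - 1 > 0" using sr by simp
    then obtain \<epsilon> where e: "0 < \<epsilon>" "\<epsilon> < (s + r - 1) / 3" "C \<epsilon> g" using gP by (meson divide_pos_pos zero_less_numeral)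
    have "(1+\<epsilon>) * s + (1-\<epsilon>) * r < 1 + \<epsilon>" using Cg[OF e(3)] by (simp add: abs_less_iff)
    then have "s + r - 1 < \<epsilon> * (1 - s + r)" by (simp add: algebra_simps)
    also have "\<epsilon> * (1 - s + r) \<le> \<epsilon> * 3" using e(1) sr by (intro mult_left_mono) (auto simp: abs_less_iff)
    finally show False using e(2) by simp
  qed
  have rpos: "r > 0"
  proof -
    have "(1+\<epsilon>1) * s + (1-\<epsilon>1) * r < 1 + \<epsilon>1" using Cg[OF e1(2)] by (simp add: abs_less_iff)
    moreover have "s = 1 - r" using sr1 by simp
    ultimately have "0 < \<epsilon>1 * r" by (simp add: algebra_simps)
    then show ?thesis using e1(1) by (simp add: zero_less_mult_iff)
  qed
  have spos: "s > 0"
  proof -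
    have "(1-\<epsilon>1) * s + (1+\<epsilon>1) * r < 1 + \<epsilon>1" using Cg[OF e1(2)] by (simp add: abs_less_iff)
    moreover have "r = 1 - s" using sr1 by simp
    ultimately have "0 < \<epsilon>1 * s" by (simp add: algebra_simps)
    then show ?thesis using e1(1) by (simp add: zero_less_mult_iff)
  qed
  have "d *\<^sub>R g = s *\<^sub>R u + r *\<^sub>R v" using dec s_def r_def by blast
  then have "d *\<^sub>R g = (1 - r) *\<^sub>R (b - a) + r *\<^sub>R (c - a)" using sr1 by (simp add: u_def v_def)
  moreover have "g \<in> L" using gF by (simp add: F_def)
  ultimately show ?thesis using rpos spos sr1 d_def by (intro bexI[of _ g] exI[of _ r]) auto
qed




lemma equal_alpha:
  assumes L: "is_lattice L" and T: "T = convex hull {a, b, c}" and cb: "convex_body T"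
    and nc: "\<not> collinear {a, b, c}"
    and h: "ha \<in> L" "hb \<in> L" "hc \<in> L"
    and al: "0 < \<alpha>" "\<alpha> < 1" "0 < \<beta>" "\<beta> < 1" "0 < \<gamma>" "\<gamma> < 1"
    and ea: "lattice_diameter L T *\<^sub>R ha = (1 - \<alpha>) *\<^sub>R (b - a) + \<alpha> *\<^sub>R (c - a)"
    and eb: "lattice_diameter L T *\<^sub>R hb = (1 - \<beta>) *\<^sub>R (c - b) + \<beta> *\<^sub>R (a - b)"
    and ec: "lattice_diameter L T *\<^sub>R hc = (1 - \<gamma>) *\<^sub>R (a - c) + \<gamma> *\<^sub>R (b - c)"
  shows "\<beta> = \<alpha> \<and> \<gamma> = \<alpha>"
proof -
  define d where "d = lattice_diameter L T"
  define g where "g = ha + hb + hc"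
  have gL: "g \<in> L" using h lat_add[OF L] by (simp add: g_def)
  have "d *\<^sub>R g = d *\<^sub>R ha + d *\<^sub>R hb + d *\<^sub>R hc" by (simp add: g_def scaleR_add_right)
  also have "\<dots> = (\<gamma> - \<alpha>) *\<^sub>R (b - a) + (\<alpha> - \<beta>) *\<^sub>R (c - a)"
    unfolding d_def ea eb ec by (simp add: algebra_simps)
  finally have dg: "d *\<^sub>R g = (\<gamma> - \<alpha>) *\<^sub>R (b - a) + (\<alpha> - \<beta>) *\<^sub>R (c - a)" .
  have "g = 0"
  proof (rule ccontr)
    assume "g \<noteq> 0"
    then show False using interior_lemma[OF L T cb gL _ dg[unfolded d_def]] al by (simp add: abs_less_iff)
  qed
  then have z: "(\<gamma> - \<alpha>) *\<^sub>R (b - a) + (\<alpha> - \<beta>) *\<^sub>R (c - a) = 0" using dg by simp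
  obtain n1 n2 where nb: "n1 \<bullet> (b - a) = 1" "n1 \<bullet> (c - a) = 0" "n2 \<bullet> (b - a) = 0" "n2 \<bullet> (c - a) = 1"
    using dual_basis[OF noncol_det[OF nc]] by blast
  have "n1 \<bullet> ((\<gamma> - \<alpha>) *\<^sub>R (b - a) + (\<alpha> - \<beta>) *\<^sub>R (c - a)) = 0"
       "n2 \<bullet> ((\<gamma> - \<alpha>) *\<^sub>R (b - a) + (\<alpha> - \<beta>) *\<^sub>R (c - a)) = 0" using z by simp_all
  then show ?thesis using nb by (simp add: inner_add_right)
qed

lemma lattice_is_gen:
  assumes L: "is_lattice L" and T: "T = convex hull {a, b, c}" and cb: "convex_body T"
    and nc: "\<not> collinear {a, b, c}"
    and h: "ha \<in> L" "hb \<in> L" and al: "0 < \<alpha>" "\<alpha> < 1"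
    and ea: "lattice_diameter L T *\<^sub>R ha = (1 - \<alpha>) *\<^sub>R (b - a) + \<alpha> *\<^sub>R (c - a)"
    and eb: "lattice_diameter L T *\<^sub>R hb = - (b - a) + (1 - \<alpha>) *\<^sub>R (c - a)"
  shows "\<forall>l\<in>L. \<exists>i j :: int. l = of_int i *\<^sub>R ha + of_int j *\<^sub>R hb"
proof
  fix l assume lL: "l \<in> L"
  define d where "d = lattice_diameter L T"
  have d0: "d > 0" using diam_pos[OF L cb] d_def by simp
  define u where "u = b - a"
  define v where "v = c - a"
  have duv: "det2 u v \<noteq> 0" using noncol_det[OF nc] by (simp add: u_def v_def)
  have "det2 (d *\<^sub>R ha) (d *\<^sub>R hb) = ((1 - \<alpha>) * (1 - \<alpha>) - \<alpha> * (-1)) * det2 u v"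
    using ea eb det2_comb[of "1 - \<alpha>" u \<alpha> v "-1" "1 - \<alpha>"] unfolding d_def u_def v_def by simp
  moreover have "det2 (d *\<^sub>R ha) (d *\<^sub>R hb) = d * d * det2 ha hb" by (simp add: det2_def algebra_simps)
  moreover have "(1 - \<alpha>) * (1 - \<alpha>) - \<alpha> * (-1) > 0" using al by (simp add: add_pos_nonneg)
  ultimately have "det2 ha hb \<noteq> 0" using duv d0 by auto
  then obtain m1 m2 where mb: "m1 \<bullet> ha = 1" "m1 \<bullet> hb = 0" "m2 \<bullet> ha = 0" "m2 \<bullet> hb = 1"
     and dec: "\<forall>x. x = (m1 \<bullet> x) *\<^sub>R ha + (m2 \<bullet> x) *\<^sub>R hb" using dual_basis by blast
  define x where "x = m1 \<bullet> l"
  define y where "y = m2 \<bullet> l"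
  define X where "X = x - of_int (floor x)"
  define Y where "Y = y - of_int (floor y)"
  have XY: "0 \<le> X" "X < 1" "0 \<le> Y" "Y < 1"
    using real_of_int_floor_add_one_gt[of x] real_of_int_floor_add_one_gt[of y]
      of_int_floor_le[of x] of_int_floor_le[of y] unfolding X_def Y_def by linarith+
  have l: "l = x *\<^sub>R ha + y *\<^sub>R hb" using dec x_def y_def by blast
  define l' where "l' = l - of_int (floor x) *\<^sub>R ha - of_int (floor y) *\<^sub>R hb"
  have l'L: "l' \<in> L" unfolding l'_def using lL h lat_diff[OF L] lat_int[OF L] by blast
  have l'XY: "l' = X *\<^sub>R ha + Y *\<^sub>R hb" by (simp add: l'_def X_def Y_def l algebra_simps)
  have "d *\<^sub>R l' = X *\<^sub>R (d *\<^sub>R ha) + Y *\<^sub>R (d *\<^sub>R hb)" by (simp add: l'XY scaleR_add_right mult.commute)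
  also have "\<dots> = (X - X * \<alpha> - Y) *\<^sub>R (b - a) + (X * \<alpha> + Y - Y * \<alpha>) *\<^sub>R (c - a)"
    unfolding d_def ea eb by (simp add: algebra_simps)
  finally have dl': "d *\<^sub>R l' = (X - X * \<alpha> - Y) *\<^sub>R (b - a) + (X * \<alpha> + Y - Y * \<alpha>) *\<^sub>R (c - a)" .
  have f: "0 \<le> X * \<alpha>" "X * \<alpha> \<le> X" "X * \<alpha> < \<alpha>" "0 \<le> Y * \<alpha>" "Y * \<alpha> \<le> Y"
          "Y - Y * \<alpha> \<le> 1 - \<alpha>"
  proof -
    show "0 \<le> X * \<alpha>" "0 \<le> Y * \<alpha>" using XY al by simp_all
    show "X * \<alpha> \<le> X" using XY al by (simp add: mult_left_le)
    show "Y * \<alpha> \<le> Y" using XY al by (simp add: mult_left_le)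
    show "X * \<alpha> < \<alpha>" using XY al by (simp add: mult_strict_right_mono[of X 1 \<alpha>, simplified])
    have "0 \<le> (1 - Y) * (1 - \<alpha>)" using XY al by simp
    then show "Y - Y * \<alpha> \<le> 1 - \<alpha>" by (simp add: algebra_simps)
  qed
  have "l' = 0"
  proof (rule ccontr)
    assume "l' \<noteq> 0"
    moreover have "\<bar>X - X * \<alpha> - Y\<bar> < 1" "\<bar>X * \<alpha> + Y - Y * \<alpha>\<bar> < 1"
        "\<bar>(X - X * \<alpha> - Y) + (X * \<alpha> + Y - Y * \<alpha>)\<bar> < 1"
      unfolding abs_less_iff using f XY al by (intro conjI; linarith)+
    ultimately show False using interior_lemma[OF L T cb l'L _ dl'[unfolded d_def]] by blast
  qed
  then have "X *\<^sub>R ha + Y *\<^sub>R hb = 0" using l'XY by simp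
  then have "m1 \<bullet> (X *\<^sub>R ha + Y *\<^sub>R hb) = 0" "m2 \<bullet> (X *\<^sub>R ha + Y *\<^sub>R hb) = 0" by simp_all
  then have "X = 0" "Y = 0" using mb by (simp_all add: inner_add_right)
  then have "l = of_int (floor x) *\<^sub>R ha + of_int (floor y) *\<^sub>R hb" using \<open>l' = 0\<close>
    by (simp add: l'_def algebra_simps)
  then show "\<exists>i j :: int. l = of_int i *\<^sub>R ha + of_int j *\<^sub>R hb" by blast
qed

lemma int_hex:
  fixes ma mb :: int and \<alpha> :: real
  assumes al: "0 < \<alpha>" "\<alpha> < 1" and nz: "ma \<noteq> 0 \<or> mb \<noteq> 0"
  shows "1 \<le> \<bar>(1-\<alpha>) * ma - \<alpha> * mb\<bar> \<or> 1 \<le> \<bar>ma + (1-\<alpha>) * mb\<bar> \<or> 1 \<le> \<bar>\<alpha> * ma + mb\<bar>"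
proof -
  consider "ma = 0" | "ma \<ge> 1 \<and> mb \<ge> 0" | "ma \<ge> 1 \<and> mb \<le> -1" | "ma \<le> -1 \<and> mb \<le> 0" | "ma \<le> -1 \<and> mb \<ge> 1"
    by linarith
  then show ?thesis
  proof cases
    case 1
    then have "mb \<noteq> 0" using nz by simp
    then have "1 \<le> \<bar>real_of_int mb\<bar>" by linarith
    then show ?thesis using 1 by simp
  next
    case 2
    have "0 \<le> (1 - \<alpha>) * mb" using 2 al by simp
    moreover have "1 \<le> real_of_int ma" using 2 by simp
    ultimately show ?thesis by (simp add: abs_if)
  next
    case 3
    have "(1 - \<alpha>) * 1 \<le> (1 - \<alpha>) * ma" using 3 al by (intro mult_left_mono) auto
    moreover have "\<alpha> * 1 \<le> \<alpha> * (- mb)" using 3 al by (intro mult_left_mono) auto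
    ultimately show ?thesis by (simp add: abs_if algebra_simps)
  next
    case 4
    have "(1 - \<alpha>) * mb \<le> 0" using 4 al by (simp add: mult_nonneg_nonpos)
    moreover have "real_of_int ma \<le> -1" using 4 by simp
    ultimately show ?thesis by (simp add: abs_if)
  next
    case 5
    have "(1 - \<alpha>) * 1 \<le> (1 - \<alpha>) * (- ma)" using 5 al by (intro mult_left_mono) auto
    moreover have "\<alpha> * 1 \<le> \<alpha> * mb" using 5 al by (intro mult_left_mono) auto
    ultimately show ?thesis by (simp add: abs_if algebra_simps)
  qed
qed




lemma width_drop:
  assumes L: "is_lattice L" and nc: "\<not> collinear {a, b, c}" and T: "T = convex hull {a, b, c}"
    and d0: "d > 0" and al: "0 < \<alpha>" "\<alpha> < 1"
    and h: "ha \<in> L" "hb \<in> L"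
    and ea: "d *\<^sub>R ha = (1 - \<alpha>) *\<^sub>R (b - a) + \<alpha> *\<^sub>R (c - a)"
    and eb: "d *\<^sub>R hb = - (b - a) + (1 - \<alpha>) *\<^sub>R (c - a)"
    and gen: "\<forall>l\<in>L. \<exists>i j :: int. l = of_int i *\<^sub>R ha + of_int j *\<^sub>R hb"
    and C: "convex_body C'" "C' \<subseteq> T" "a \<notin> C' \<or> b \<notin> C'"
  shows "lattice_width L C' < lattice_width L T"
proof -
  define u where "u = b - a"
  define v where "v = c - a"
  obtain n1 n2 where nb: "n1 \<bullet> u = 1" "n1 \<bullet> v = 0" "n2 \<bullet> u = 0" "n2 \<bullet> v = 1"
     and dec: "\<forall>x. x = (n1 \<bullet> x) *\<^sub>R u + (n2 \<bullet> x) *\<^sub>R v"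
    using dual_basis[OF noncol_det[OF nc]] unfolding u_def v_def by blast
  define \<delta> where "\<delta> = 1 - \<alpha> + \<alpha> * \<alpha>"
  have \<delta>0: "\<delta> > 0" using al by (simp add: \<delta>_def add_pos_nonneg)
  define k where "k = d / \<delta>"
  have k0: "k > 0" using d0 \<delta>0 by (simp add: k_def)
  have dk: "d = \<delta> * k" using \<delta>0 by (simp add: k_def)
  define yc where "yc = k *\<^sub>R n1 + (\<alpha> * k) *\<^sub>R n2"
  have ycu: "u \<bullet> yc = k" "v \<bullet> yc = \<alpha> * k"
    by (simp_all add: yc_def inner_add_right nb inner_commute)
  have "(d *\<^sub>R ha) \<bullet> yc = ((1 - \<alpha>) *\<^sub>R u + \<alpha> *\<^sub>R v) \<bullet> yc" using ea by (simp add: u_def v_def)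
  then have "d * (ha \<bullet> yc) = (1 - \<alpha>) * k + \<alpha> * (\<alpha> * k)" by (simp add: inner_add_left ycu)
  also have "\<dots> = d" by (simp add: dk \<delta>_def algebra_simps)
  finally have hay: "ha \<bullet> yc = 1" using d0 by simp
  have "(d *\<^sub>R hb) \<bullet> yc = (- u + (1 - \<alpha>) *\<^sub>R v) \<bullet> yc" using eb by (simp add: u_def v_def)
  then have "d * (hb \<bullet> yc) = - k + (1 - \<alpha>) * (\<alpha> * k)" by (simp add: inner_add_left inner_diff_left ycu)
  also have "\<dots> = - d" by (simp add: dk \<delta>_def algebra_simps)
  finally have "d * (hb \<bullet> yc) = d * (-1)" by simp
  then have hby: "hb \<bullet> yc = -1" using d0 by (subst (asm) mult_cancel_left) auto
  have ycd: "yc \<in> dual_lattice L"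
    unfolding dual_lattice_def
  proof (intro CollectI ballI)
    fix l assume "l \<in> L"
    then obtain i j :: int where "l = of_int i *\<^sub>R ha + of_int j *\<^sub>R hb" using gen by blast
    then have "l \<bullet> yc = of_int (i - j)" by (simp add: inner_add_left hay hby)
    then show "l \<bullet> yc \<in> \<int>" by simp
  qed
  have yc0: "yc \<noteq> 0" using ycu k0 by auto
  have aT: "a \<in> T" and bT: "b \<in> T" and cT: "c \<in> T" unfolding T by (simp_all add: hull_inc)
  have bT': "bounded T" unfolding T by (intro compact_imp_bounded compact_convex_hull finite_imp_compact) simp
  have lower: "\<forall>y\<in>dual_lattice L. y \<noteq> 0 \<longrightarrow> k \<le> dir_width y T"
  proof (intro ballI impI)
    fix y assume yd: "y \<in> dual_lattice L" and y0: "y \<noteq> 0"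
    have "ha \<bullet> y \<in> \<int>" "hb \<bullet> y \<in> \<int>" using yd h by (auto simp: dual_lattice_def)
    then obtain ma mb :: int where mab: "ha \<bullet> y = of_int ma" "hb \<bullet> y = of_int mb" by (metis Ints_cases)
    define Y1 where "Y1 = u \<bullet> y"
    define Y2 where "Y2 = v \<bullet> y"
    have "(d *\<^sub>R ha) \<bullet> y = ((1 - \<alpha>) *\<^sub>R u + \<alpha> *\<^sub>R v) \<bullet> y" using ea by (simp add: u_def v_def)
    then have E1: "d * ma = (1 - \<alpha>) * Y1 + \<alpha> * Y2" by (simp add: inner_add_left mab Y1_def Y2_def)
    have "(d *\<^sub>R hb) \<bullet> y = (- u + (1 - \<alpha>) *\<^sub>R v) \<bullet> y" using eb by (simp add: u_def v_def)
    then have E2: "d * mb = - Y1 + (1 - \<alpha>) * Y2" by (simp add: inner_add_left inner_diff_left mab Y1_def Y2_def)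
    have w1: "\<bar>Y1\<bar> \<le> dir_width y T"
      using dw_upper[OF bT' bT aT, of y] dw_upper[OF bT' aT bT, of y]
      by (simp add: Y1_def u_def inner_commute inner_diff_right abs_le_iff)
    have w2: "\<bar>Y2\<bar> \<le> dir_width y T"
      using dw_upper[OF bT' cT aT, of y] dw_upper[OF bT' aT cT, of y]
      by (simp add: Y2_def v_def inner_commute inner_diff_right abs_le_iff)
    have w3: "\<bar>Y1 - Y2\<bar> \<le> dir_width y T"
      using dw_upper[OF bT' bT cT, of y] dw_upper[OF bT' cT bT, of y]
      by (simp add: Y1_def Y2_def u_def v_def inner_commute inner_diff_right abs_le_iff)
    show "k \<le> dir_width y T"
    proof (rule ccontr)
      assume "\<not> k \<le> dir_width y T"
      then have Yb: "\<bar>Y1\<bar> < k" "\<bar>Y2\<bar> < k" "\<bar>Y1 - Y2\<bar> < k" using w1 w2 w3 by auto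
      have Q1: "d * ((1 - \<alpha>) * ma - \<alpha> * mb) = \<delta> * Y1"
      proof -
        have "d * ((1 - \<alpha>) * ma - \<alpha> * mb) = (1 - \<alpha>) * (d * ma) - \<alpha> * (d * mb)" by (simp add: algebra_simps)
        also have "\<dots> = \<delta> * Y1" unfolding E1 E2 \<delta>_def by (simp add: algebra_simps)
        finally show ?thesis .
      qed
      have Q2: "d * (ma + (1 - \<alpha>) * mb) = \<delta> * Y2"
      proof -
        have "d * (ma + (1 - \<alpha>) * mb) = (d * ma) + (1 - \<alpha>) * (d * mb)" by (simp add: algebra_simps)
        also have "\<dots> = \<delta> * Y2" unfolding E1 E2 \<delta>_def by (simp add: algebra_simps)
        finally show ?thesis .
      qed
      have Q3: "d * (\<alpha> * ma + mb) = \<delta> * (Y2 - Y1)"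
      proof -
        have "d * (\<alpha> * ma + mb) = \<alpha> * (d * ma) + (d * mb)" by (simp add: algebra_simps)
        also have "\<dots> = \<delta> * (Y2 - Y1)" unfolding E1 E2 \<delta>_def by (simp add: algebra_simps)
        finally show ?thesis .
      qed
      have sm: "\<bar>q\<bar> < 1" if "d * q = \<delta> * Z" "\<bar>Z\<bar> < k" for q Z
      proof -
        have "d * \<bar>q\<bar> = \<delta> * \<bar>Z\<bar>" using that(1) d0 \<delta>0
          by (metis abs_mult abs_of_pos)
        also have "\<dots> < \<delta> * k" using that(2) \<delta>0 by simp
        finally have "d * \<bar>q\<bar> < d * 1" using dk by simp
        then show ?thesis using d0 by simp
      qed
      have qs: "\<bar>(1 - \<alpha>) * ma - \<alpha> * mb\<bar> < 1" "\<bar>ma + (1 - \<alpha>) * mb\<bar> < 1" "\<bar>\<alpha> * ma + mb\<bar> < 1"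
      proof -
        have "\<bar>Y2 - Y1\<bar> < k" using Yb(3) by (simp add: abs_minus_commute)
        then show "\<bar>(1 - \<alpha>) * ma - \<alpha> * mb\<bar> < 1" "\<bar>ma + (1 - \<alpha>) * mb\<bar> < 1" "\<bar>\<alpha> * ma + mb\<bar> < 1"
          using sm[OF Q1 Yb(1)] sm[OF Q2 Yb(2)] sm[OF Q3] by blast+
      qed
      have nz: "ma \<noteq> 0 \<or> mb \<noteq> 0"
      proof (rule ccontr)
        assume "\<not> (ma \<noteq> 0 \<or> mb \<noteq> 0)"
        then have "\<delta> * Y1 = 0" "\<delta> * Y2 = 0" using Q1 Q2 by auto
        then have "Y1 = 0" "Y2 = 0" using \<delta>0 by auto
        obtain r1 r2 where e: "y = r1 *\<^sub>R u + r2 *\<^sub>R v" using dec by blast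
        have "y \<bullet> y = y \<bullet> (r1 *\<^sub>R u + r2 *\<^sub>R v)" by (simp only: e[symmetric])
        also have "\<dots> = 0" using \<open>Y1 = 0\<close> \<open>Y2 = 0\<close>
          by (simp add: inner_add_right Y1_def Y2_def inner_commute)
        finally show False using y0 by simp
      qed
      show False using int_hex[OF al nz] qs by linarith
    qed
  qed
  have kT: "k \<le> lattice_width L T" using lw_ge[OF lower ycd yc0] .
  obtain x0 where x0: "x0 \<in> C'" using C(1) unfolding convex_body_def using interior_subset by blast
  have cC: "compact C'" using C(1) by (simp add: convex_body_def)
  have w1: "lattice_width L C' \<le> dir_width yc C'" using lw_le[OF ycd yc0 compact_imp_bounded[OF cC] x0] .
  have coords: "\<exists>s t. s \<ge> 0 \<and> t \<ge> 0 \<and> s + t \<le> 1 \<and> x = a + s *\<^sub>R u + t *\<^sub>R v \<and>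
       yc \<bullet> x = yc \<bullet> a + k * (s + \<alpha> * t) \<and> 0 \<le> \<alpha> * t \<and> \<alpha> * t \<le> t" if xT: "x \<in> T" for x
  proof -
    obtain s t where st: "s \<ge> 0" "t \<ge> 0" "s + t \<le> 1" "x = a + s *\<^sub>R u + t *\<^sub>R v"
      using tri_coords[of x a b c] xT T by (auto simp: u_def v_def)
    have "yc \<bullet> x = yc \<bullet> a + k * (s + \<alpha> * t)" using ycu
      by (simp add: st(4) inner_add_right inner_commute algebra_simps)
    moreover have "0 \<le> \<alpha> * t" "\<alpha> * t \<le> t" using al st by (auto simp: mult_left_le_one_le)
    ultimately show ?thesis using st by blast
  qed
  have bnd: "\<forall>x\<in>T. yc \<bullet> a \<le> yc \<bullet> x \<and> yc \<bullet> x \<le> yc \<bullet> a + k"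
  proof
    fix x assume "x \<in> T"
    then obtain s t where st: "s \<ge> 0" "t \<ge> 0" "s + t \<le> 1" "yc \<bullet> x = yc \<bullet> a + k * (s + \<alpha> * t)"
      "0 \<le> \<alpha> * t" "\<alpha> * t \<le> t" using coords by blast
    have "0 \<le> k * (s + \<alpha> * t)" using k0 st by simp
    moreover have "k * (s + \<alpha> * t) \<le> k * 1" using k0 st by (intro mult_left_mono) auto
    ultimately show "yc \<bullet> a \<le> yc \<bullet> x \<and> yc \<bullet> x \<le> yc \<bullet> a + k" using st(4) by simp
  qed
  have ua: "\<forall>x\<in>T. yc \<bullet> x = yc \<bullet> a \<longrightarrow> x = a"
  proof (intro ballI impI)
    fix x assume "x \<in> T" "yc \<bullet> x = yc \<bullet> a"
    then obtain s t where st: "s \<ge> 0" "t \<ge> 0" "x = a + s *\<^sub>R u + t *\<^sub>R v" "k * (s + \<alpha> * t) = 0"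
      "0 \<le> \<alpha> * t" using coords by fastforce
    then have "s + \<alpha> * t = 0" using k0 by simp
    then have "s = 0" "\<alpha> * t = 0" using st by linarith+
    then have "t = 0" using al by simp
    then show "x = a" using st \<open>s = 0\<close> by simp
  qed
  have ub: "\<forall>x\<in>T. yc \<bullet> x = yc \<bullet> a + k \<longrightarrow> x = b"
  proof (intro ballI impI)
    fix x assume "x \<in> T" "yc \<bullet> x = yc \<bullet> a + k"
    then obtain s t where st: "s \<ge> 0" "t \<ge> 0" "s + t \<le> 1" "x = a + s *\<^sub>R u + t *\<^sub>R v" "k * (s + \<alpha> * t) = k"
      "0 \<le> \<alpha> * t" "\<alpha> * t \<le> t" using coords by fastforce
    then have e: "s + \<alpha> * t = 1" using k0 by simp
    have "(1 - \<alpha>) * t \<le> 0" using e st by (simp add: algebra_simps)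
    then have "t = 0" using al st by (simp add: mult_le_0_iff)
    then have "s = 1" using e by simp
    then show "x = b" using st \<open>t = 0\<close> by (simp add: u_def)
  qed
  have "dir_width yc C' < (yc \<bullet> a + k) - yc \<bullet> a"
  proof (cases "a \<notin> C'")
    case True
    then show ?thesis using dw_strict[OF cC _ C(2) bnd True] x0 ua by blast
  next
    case False
    then have "b \<notin> C'" using C(3) by blast
    then show ?thesis using dw_strict[OF cC _ C(2) bnd \<open>b \<notin> C'\<close>] x0 ub by blast
  qed
  then show ?thesis using w1 kT by simp
qed




lemma part1:
  assumes L: "is_lattice L" and tri: "is_triangle T" and comp: "lattice_complete L T"
  shows "lattice_reduced L T"
proof -
  obtain a b c where nc: "\<not> collinear {a, b, c}" and T: "T = convex hull {a, b, c}"
    using tri unfolding is_triangle_def by blast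
  have cb: "convex_body T" using comp by (simp add: lattice_complete_def)
  define d where "d = lattice_diameter L T"
  have d0: "d > 0" using diam_pos[OF L cb] d_def by simp
  have s1: "{b, c, a} = {a, b, c}" "{c, a, b} = {a, b, c}" by auto
  have nc2: "\<not> collinear {b, c, a}" and nc3: "\<not> collinear {c, a, b}" using nc s1 by simp_all
  have T2: "T = convex hull {b, c, a}" and T3: "T = convex hull {c, a, b}" using T s1 by simp_all
  obtain ha \<alpha> where ha: "ha \<in> L" "0 < \<alpha>" "\<alpha> < 1"
      and ea: "d *\<^sub>R ha = (1 - \<alpha>) *\<^sub>R (b - a) + \<alpha> *\<^sub>R (c - a)"
    using cevian[OF L nc T comp] d_def by blast
  obtain hb \<beta> where hb: "hb \<in> L" "0 < \<beta>" "\<beta> < 1"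
      and eb: "d *\<^sub>R hb = (1 - \<beta>) *\<^sub>R (c - b) + \<beta> *\<^sub>R (a - b)"
    using cevian[OF L nc2 T2 comp] d_def by blast
  obtain hc \<gamma> where hc: "hc \<in> L" "0 < \<gamma>" "\<gamma> < 1"
      and ec: "d *\<^sub>R hc = (1 - \<gamma>) *\<^sub>R (a - c) + \<gamma> *\<^sub>R (b - c)"
    using cevian[OF L nc3 T3 comp] d_def by blast
  have eq: "\<beta> = \<alpha> \<and> \<gamma> = \<alpha>"
    using equal_alpha[OF L T cb nc ha(1) hb(1) hc(1) ha(2,3) hb(2,3) hc(2,3)] ea eb ec d_def by blast
  have eb1: "d *\<^sub>R hb = (1 - \<alpha>) *\<^sub>R (c - b) + \<alpha> *\<^sub>R (a - b)" using eb eq by simp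
  have eb': "d *\<^sub>R hb = - (b - a) + (1 - \<alpha>) *\<^sub>R (c - a)"
    unfolding eb1 by (simp add: algebra_simps)
  have ec': "d *\<^sub>R hc = - (c - b) + (1 - \<alpha>) *\<^sub>R (a - b)"
    unfolding ec using eq by (simp add: algebra_simps)
  have gen1: "\<forall>l\<in>L. \<exists>i j :: int. l = of_int i *\<^sub>R ha + of_int j *\<^sub>R hb"
    using lattice_is_gen[OF L T cb nc ha(1) hb(1) ha(2,3)] ea eb' d_def by blast
  have gen2: "\<forall>l\<in>L. \<exists>i j :: int. l = of_int i *\<^sub>R hb + of_int j *\<^sub>R hc"
    using lattice_is_gen[OF L T2 cb nc2 hb(1) hc(1) ha(2,3)] eb1 ec' d_def by blast
  show ?thesis
    unfolding lattice_reduced_def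
  proof (intro conjI cb notI)
    assume "\<exists>C'. convex_body C' \<and> C' \<subset> T \<and> lattice_width L C' = lattice_width L T"
    then obtain C' where C': "convex_body C'" "C' \<subset> T" "lattice_width L C' = lattice_width L T" by blast
    have "a \<notin> C' \<or> b \<notin> C' \<or> c \<notin> C'"
    proof (rule ccontr)
      assume "\<not> (a \<notin> C' \<or> b \<notin> C' \<or> c \<notin> C')"
      then have "{a, b, c} \<subseteq> C'" by blast
      then have "T \<subseteq> C'" unfolding T using C'(1) by (intro hull_minimal) (auto simp: convex_body_def)
      then show False using C'(2) by blast
    qed
    moreover have "a \<notin> C' \<or> b \<notin> C' \<Longrightarrow> lattice_width L C' < lattice_width L T"
      using width_drop[OF L nc T d0 ha(2,3) ha(1) hb(1) ea eb' gen1 C'(1)] C'(2) by blast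
    moreover have "b \<notin> C' \<or> c \<notin> C' \<Longrightarrow> lattice_width L C' < lattice_width L T"
      using width_drop[OF L nc2 T2 d0 ha(2,3) hb(1) hc(1) eb1 ec' gen2 C'(1)] C'(2) by blast
    ultimately show False using C'(3) by auto
  qed
qed

section \<open>The counterexample for the converse\<close>

definition Z2 :: "(real^2) set" where "Z2 = {x. x$1 \<in> \<int> \<and> x$2 \<in> \<int>}"
definition e1 :: "real^2" where "e1 = axis 1 1"
definition e2 :: "real^2" where "e2 = axis 2 1"
definition Delta :: "(real^2) set" where "Delta = convex hull {0, e1, e2}"

lemma e_comp [simp]: "e1$1 = 1" "e1$2 = 0" "e2$1 = 0" "e2$2 = 1"
  by (simp_all add: e1_def e2_def axis_def)

lemma decomp2: "(x::real^2) = x$1 *\<^sub>R e1 + x$2 *\<^sub>R e2"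
  unfolding vec_eq_iff forall_2 by simp

lemma delta_char: "x \<in> Delta \<longleftrightarrow> 0 \<le> x$1 \<and> 0 \<le> x$2 \<and> x$1 + x$2 \<le> 1"
proof
  assume "x \<in> Delta"
  then obtain s t where st: "s \<ge> 0" "t \<ge> 0" "s + t \<le> 1" "x = 0 + s *\<^sub>R (e1 - 0) + t *\<^sub>R (e2 - 0)"
    using tri_coords[of x 0 e1 e2] unfolding Delta_def by blast
  then have "x$1 = s" "x$2 = t" by simp_all
  then show "0 \<le> x$1 \<and> 0 \<le> x$2 \<and> x$1 + x$2 \<le> 1" using st by simp
next
  assume a: "0 \<le> x$1 \<and> 0 \<le> x$2 \<and> x$1 + x$2 \<le> 1"
  have "0 + x$1 *\<^sub>R (e1 - 0) + x$2 *\<^sub>R (e2 - 0) \<in> Delta"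
    unfolding Delta_def using a by (intro tri_mem) auto
  then show "x \<in> Delta" using decomp2[of x] by simp
qed

lemma Z2_lattice: "is_lattice Z2"
  unfolding is_lattice_def
proof (intro conjI)
  show "0 \<in> Z2" by (simp add: Z2_def)
  show "\<forall>x\<in>Z2. \<forall>y\<in>Z2. x - y \<in> Z2" by (simp add: Z2_def Ints_diff)
  show "\<exists>e>0. \<forall>x\<in>Z2. x \<noteq> 0 \<longrightarrow> e \<le> norm x"
  proof (intro exI[of _ 1] conjI ballI impI)
    fix x assume x: "x \<in> Z2" "x \<noteq> 0"
    then have "x$1 \<noteq> 0 \<or> x$2 \<noteq> 0" by (simp add: vec_eq_iff forall_2)
    then show "1 \<le> norm x"
    proof
      assume "x$1 \<noteq> 0"
      then have "1 \<le> \<bar>x$1\<bar>" using x(1) Ints_nonzero_abs_ge1 by (auto simp: Z2_def)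
      then show ?thesis using component_le_norm_cart[of x 1] by linarith
    next
      assume "x$2 \<noteq> 0"
      then have "1 \<le> \<bar>x$2\<bar>" using x(1) Ints_nonzero_abs_ge1 by (auto simp: Z2_def)
      then show ?thesis using component_le_norm_cart[of x 2] by linarith
    qed
  qed simp
  show "span Z2 = UNIV"
  proof -
    have "e1 \<in> Z2" "e2 \<in> Z2" by (simp_all add: Z2_def)
    then have "x \<in> span Z2" for x
      using decomp2[of x] by (metis span_add span_base span_scale)
    then show ?thesis by auto
  qed
qed

lemma Delta_body: "convex_body Delta"
  unfolding convex_body_def
proof (intro conjI)
  show "compact Delta" unfolding Delta_def by (intro compact_convex_hull finite_imp_compact) simp
  show "convex Delta" unfolding Delta_def by simp
  define z :: "real^2" where "z = (1/4) *\<^sub>R e1 + (1/4) *\<^sub>R e2"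
  have "ball z (1/8) \<subseteq> Delta"
  proof
    fix x assume "x \<in> ball z (1/8)"
    then have "norm (x - z) < 1/8" by (simp add: dist_norm norm_minus_commute)
    then have "\<bar>(x - z)$1\<bar> < 1/8" "\<bar>(x - z)$2\<bar> < 1/8"
      using component_le_norm_cart[of "x - z"] by (meson le_less_trans)+
    moreover have c1: "(x - z)$1 = x$1 - 1/4" and c2: "(x - z)$2 = x$2 - 1/4" by (simp_all add: z_def)
    ultimately have "\<bar>x$1 - 1/4\<bar> < 1/8" "\<bar>x$2 - 1/4\<bar> < 1/8" unfolding c1 c2 by simp_all
    then show "x \<in> Delta" unfolding delta_char abs_less_iff by (intro conjI; linarith)
  qed
  then have "ball z (1/8) \<subseteq> interior Delta" by (rule interior_maximal) simp
  moreover have "z \<in> ball z (1/8)" by simp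
  ultimately show "interior Delta \<noteq> {}" by blast
qed

lemma Delta_tri: "is_triangle Delta"
  unfolding is_triangle_def Delta_def
proof (intro exI conjI)
  show "\<not> collinear {0, e1, e2}"
  proof
    assume "collinear {0, e1, e2}"
    then have "e1 = 0 \<or> e2 = 0 \<or> (\<exists>c. e2 = c *\<^sub>R e1)" by (simp add: collinear_lemma)
    then show False
    proof (elim disjE exE)
      assume "e1 = 0" then have "e1$1 = 0" by simp then show False by simp
    next
      assume "e2 = 0" then have "e2$2 = 0" by simp then show False by simp
    next
      fix c assume h: "e2 = c *\<^sub>R e1"
      have "e2$2 = (c *\<^sub>R e1)$2" using h by (rule arg_cong)
      then show False by simp
    qed
  qed
qed simp

lemma Z2_dual: "y \<in> dual_lattice Z2 \<Longrightarrow> y$1 \<in> \<int> \<and> y$2 \<in> \<int>"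
proof -
  assume y: "y \<in> dual_lattice Z2"
  have "e1 \<in> Z2" "e2 \<in> Z2" by (simp_all add: Z2_def)
  then have "e1 \<bullet> y \<in> \<int>" "e2 \<bullet> y \<in> \<int>" using y by (auto simp: dual_lattice_def)
  then show ?thesis by (simp add: inner2)
qed

lemma Z2_dual_mem: "y$1 \<in> \<int> \<Longrightarrow> y$2 \<in> \<int> \<Longrightarrow> y \<in> dual_lattice Z2"
  by (auto simp: dual_lattice_def Z2_def inner2 Ints_add Ints_mult)

lemma Delta_reduced: "lattice_reduced Z2 Delta"
  unfolding lattice_reduced_def
proof (intro conjI Delta_body notI)
  assume "\<exists>C'. convex_body C' \<and> C' \<subset> Delta \<and> lattice_width Z2 C' = lattice_width Z2 Delta"
  then obtain C' where C': "convex_body C'" "C' \<subset> Delta" "lattice_width Z2 C' = lattice_width Z2 Delta" by blast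
  have bD: "bounded Delta" using Delta_body cb_bounded by blast
  have D0: "0 \<in> Delta" "e1 \<in> Delta" "e2 \<in> Delta" by (simp_all add: delta_char)
  have e1d: "e1 \<in> dual_lattice Z2" "e2 \<in> dual_lattice Z2" "e1 + e2 \<in> dual_lattice Z2"
    by (auto intro!: Z2_dual_mem)
  have e0: "e1 \<noteq> 0" "e2 \<noteq> 0" "e1 + e2 \<noteq> 0" by (auto simp: vec_eq_iff forall_2)
  have lower: "\<forall>y\<in>dual_lattice Z2. y \<noteq> 0 \<longrightarrow> 1 \<le> dir_width y Delta"
  proof (intro ballI impI)
    fix y assume y: "y \<in> dual_lattice Z2" "y \<noteq> 0"
    have w1: "\<bar>y$1\<bar> \<le> dir_width y Delta"
      using dw_upper[OF bD D0(2) D0(1), of y] dw_upper[OF bD D0(1) D0(2), of y]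
      by (simp add: inner2 abs_le_iff)
    have w2: "\<bar>y$2\<bar> \<le> dir_width y Delta"
      using dw_upper[OF bD D0(3) D0(1), of y] dw_upper[OF bD D0(1) D0(3), of y]
      by (simp add: inner2 abs_le_iff)
    have "y$1 \<noteq> 0 \<or> y$2 \<noteq> 0" using y(2) by (simp add: vec_eq_iff forall_2)
    then show "1 \<le> dir_width y Delta"
      using Z2_dual[OF y(1)] Ints_nonzero_abs_ge1 w1 w2 by fastforce
  qed
  have lD: "1 \<le> lattice_width Z2 Delta" using lw_ge[OF lower e1d(1) e0(1)] .
  obtain x0 where x0: "x0 \<in> C'" using C'(1) unfolding convex_body_def using interior_subset by blast
  have cC: "compact C'" using C'(1) by (simp add: convex_body_def)
  have C'D: "C' \<subseteq> Delta" using C'(2) by blast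
  have "0 \<notin> C' \<or> e1 \<notin> C' \<or> e2 \<notin> C'"
  proof (rule ccontr)
    assume "\<not> (0 \<notin> C' \<or> e1 \<notin> C' \<or> e2 \<notin> C')"
    then have "{0, e1, e2} \<subseteq> C'" by blast
    then have "Delta \<subseteq> C'" unfolding Delta_def using C'(1) by (intro hull_minimal) (auto simp: convex_body_def)
    then show False using C'(2) by blast
  qed
  then have "\<exists>y. y \<in> dual_lattice Z2 \<and> y \<noteq> 0 \<and> dir_width y C' < 1"
  proof (elim disjE)
    assume "0 \<notin> C'"
    have bnd: "\<forall>x\<in>Delta. 0 \<le> (e1 + e2) \<bullet> x \<and> (e1 + e2) \<bullet> x \<le> 1" by (simp add: delta_char inner2)
    have u: "\<forall>x\<in>Delta. (e1 + e2) \<bullet> x = 0 \<longrightarrow> x = 0" by (auto simp: delta_char inner2 vec_eq_iff forall_2)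
    have "dir_width (e1 + e2) C' < 1 - 0" using dw_strict[OF cC _ C'D bnd \<open>0 \<notin> C'\<close>] u x0 by blast
    then show ?thesis using e1d e0 by auto
  next
    assume "e1 \<notin> C'"
    have bnd: "\<forall>x\<in>Delta. 0 \<le> e1 \<bullet> x \<and> e1 \<bullet> x \<le> 1" by (simp add: delta_char inner2)
    have u: "\<forall>x\<in>Delta. e1 \<bullet> x = 1 \<longrightarrow> x = e1" by (auto simp: delta_char inner2 vec_eq_iff forall_2)
    have "dir_width e1 C' < 1 - 0" using dw_strict[OF cC _ C'D bnd \<open>e1 \<notin> C'\<close>] u x0 by blast
    then show ?thesis using e1d e0 by auto
  next
    assume "e2 \<notin> C'"
    have bnd: "\<forall>x\<in>Delta. 0 \<le> e2 \<bullet> x \<and> e2 \<bullet> x \<le> 1" by (simp add: delta_char inner2)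
    have u: "\<forall>x\<in>Delta. e2 \<bullet> x = 1 \<longrightarrow> x = e2" by (auto simp: delta_char inner2 vec_eq_iff forall_2)
    have "dir_width e2 C' < 1 - 0" using dw_strict[OF cC _ C'D bnd \<open>e2 \<notin> C'\<close>] u x0 by blast
    then show ?thesis using e1d e0 by auto
  qed
  then obtain y where y: "y \<in> dual_lattice Z2" "y \<noteq> 0" "dir_width y C' < 1" by blast
  have "lattice_width Z2 C' \<le> dir_width y C'" using lw_le[OF y(1,2) compact_imp_bounded[OF cC] x0] .
  then show False using y(3) lD C'(3) by simp
qed

definition Sq :: "(real^2) set" where "Sq = cbox 0 (e1 + e2)"

lemma Sq_char: "x \<in> Sq \<longleftrightarrow> 0 \<le> x$1 \<and> x$1 \<le> 1 \<and> 0 \<le> x$2 \<and> x$2 \<le> 1"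
  unfolding Sq_def mem_box_cart forall_2 by simp

lemma Sq_body: "convex_body Sq"
  unfolding convex_body_def
proof (intro conjI)
  show "compact Sq" "convex Sq" by (simp_all add: Sq_def)
  have "(1/2) *\<^sub>R (e1 + e2) \<in> box 0 (e1 + e2)" unfolding mem_box_cart forall_2 by simp
  then show "interior Sq \<noteq> {}" by (auto simp: Sq_def)
qed

lemma Sq_lengths: "l \<in> lattice_lengths Z2 Sq \<Longrightarrow> l \<le> 1"
proof -
  assume "l \<in> lattice_lengths Z2 Sq"
  then obtain a b v where ab: "a \<in> Sq" "b \<in> Sq" "a \<noteq> b" and gen: "lattice_generator Z2 a b v"
    and l: "l = norm (b - a) / norm v" unfolding lattice_lengths_def by blast
  obtain t where t: "t > 0" "v = t *\<^sub>R (b - a)" "norm (b - a) / norm v = 1 / t" using gen_len[OF gen ab(3)] by blast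
  have v: "v \<in> Z2" "v \<noteq> 0" using gen by (auto simp: lattice_generator_def)
  show "l \<le> 1"
  proof (rule ccontr)
    assume "\<not> l \<le> 1"
    moreover have "l = 1 / t" by (simp only: l t(3))
    ultimately have "t < 1" using t(1) by (simp add: field_simps)
    have "\<bar>v$i\<bar> < 1" for i
    proof -
      have ones: "(e1 + e2)$j = 1" for j :: 2 using forall_2[of "\<lambda>j. (e1 + e2)$j = 1"] by simp
      have "\<bar>(b - a)$i\<bar> \<le> 1" using ab(1,2) unfolding Sq_def mem_box_cart ones
        by (auto simp: abs_le_iff) (metis add_increasing2 diff_le_eq)+
      then have "t * \<bar>(b - a)$i\<bar> \<le> t * 1" using t(1) by (intro mult_left_mono) auto
      moreover have "\<bar>v$i\<bar> = t * \<bar>(b - a)$i\<bar>" using t(1) by (simp add: t(2) abs_mult)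
      ultimately show ?thesis using \<open>t < 1\<close> by linarith
    qed
    then have "v$1 = 0" "v$2 = 0" using v(1) Ints_nonzero_abs_less1 by (auto simp: Z2_def)
    then show False using v(2) by (simp add: vec_eq_iff forall_2)
  qed
qed

lemma Delta_not_complete: "\<not> lattice_complete Z2 Delta"
proof
  assume comp: "lattice_complete Z2 Delta"
  have DS: "Delta \<subseteq> Sq" by (auto simp: delta_char Sq_char)
  have "e1 + e2 \<in> Sq" "e1 + e2 \<notin> Delta" by (simp_all add: Sq_char delta_char)
  then have sub: "Delta \<subset> Sq" using DS by blast
  have L: "is_lattice Z2" by (rule Z2_lattice)
  have D0: "0 \<in> Delta" "e1 \<in> Delta" by (simp_all add: delta_char)
  have e1Z: "e1 \<in> Z2" "e1 \<noteq> 0" by (auto simp: Z2_def vec_eq_iff forall_2)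
  have "e1 = 1 *\<^sub>R (e1 - 0)" by simp
  then obtain v where gen: "lattice_generator Z2 0 e1 v" using gen_exists[OF L e1Z zero_less_one] by blast
  have "norm (e1 - 0) / norm v \<ge> 1" using gen_len_ge[OF L gen e1Z, of 1] by simp
  moreover have l1: "norm (e1 - 0) / norm v \<in> lattice_lengths Z2 Delta"
    unfolding lattice_lengths_def using D0 e1Z(2) gen by fastforce
  moreover have lsub: "lattice_lengths Z2 Delta \<subseteq> lattice_lengths Z2 Sq"
    unfolding lattice_lengths_def using DS by blast
  moreover have "norm (e1 - 0) / norm v \<le> 1" using Sq_lengths lsub l1 by blast
  ultimately have one: "1 \<in> lattice_lengths Z2 Delta" using e1Z(2) by simp
  have "lattice_diameter Z2 Delta = 1"
    unfolding lattice_diameter_def using one lsub Sq_lengths by (intro cSup_eq_maximum) auto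
  moreover have "lattice_diameter Z2 Sq = 1"
    unfolding lattice_diameter_def using one lsub Sq_lengths by (intro cSup_eq_maximum) auto
  ultimately show False using comp Sq_body sub unfolding lattice_complete_def by auto
qed

theorem theorem1p4:
  shows "(\<forall>L T. is_lattice L \<and> is_triangle T \<and> lattice_complete L T \<longrightarrow> lattice_reduced L T) \<and>
         (\<exists>L T. is_lattice L \<and> is_triangle T \<and> lattice_reduced L T \<and> \<not> lattice_complete L T)"
  using part1 Z2_lattice Delta_tri Delta_reduced Delta_not_complete by blast


end
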